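(* Consider a fair division instance with $n$ agents, $m$ divisible goods, additive valuations and generalized assignment constraints. For any weight vector $w\in\mathbb{R}_+^n$ with all components positive, and any feasible allocation $x=(x_1,\dots,x_n)$ maximizing $\sum_{i=1}^n w_i v_i(x_i)$ over all feasible allocations, the envy graph of $x$ is acyclic.
   Context: An allocation is $x=(x_1,\dots,x_n)$ with $x_i\in[0,1]^m$ and $\sum_i x_{i,g}\le 1$ for each good $g$. Additive valuations: $v_i(y)=\sum_g y_g v_{i,g}$, $v_{i,g}\ge0$. Generalized assignment constraints: agent $i$ has sizes $s_i(g)\ge0$ and budget $B_i\ge0$; a bundle $y$ is feasible for $i$ iff $\sum_g s_i(g)y_g\le B_i$; an allocation is feasible if each $x_i$ is feasible for $i$. Agent $i$ (feasibly) envies agent $h$ in $x$ if there is a bundle $y\le x_h$ (componentwise) feasible for $i$ with $v_i(y)>v_i(x_i)$. The envy graph of $x$ is the directed graph on vertex set $[n]$ with an edge $i\to h$ iff $i$ envies $h$. *)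

theory Defs
  imports Complex_Main
begin

(* A bundle is a function
  nat => real (only goods below m matter); an allocation is a function
  nat => nat => real, where x i g is the fraction of good g given to agent i. *)

definition frac_bundle :: "nat \<Rightarrow> (nat \<Rightarrow> real) \<Rightarrow> bool" where
  "frac_bundle m y \<longleftrightarrow> (\<forall>g<m. 0 \<le> y g \<and> y g \<le> 1)"

definition allocation :: "nat \<Rightarrow> nat \<Rightarrow> (nat \<Rightarrow> nat \<Rightarrow> real) \<Rightarrow> bool" where
  "allocation n m x \<longleftrightarrow> (\<forall>i<n. frac_bundle m (x i)) \<and> (\<forall>g<m. (\<Sum>i<n. x i g) \<le> 1)"

definition val :: "nat \<Rightarrow> (nat \<Rightarrow> nat \<Rightarrow> real) \<Rightarrow> nat \<Rightarrow> (nat \<Rightarrow> real) \<Rightarrow> real" where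
  "val m v i y = (\<Sum>g<m. y g * v i g)"

definition feasible_bundle :: "nat \<Rightarrow> (nat \<Rightarrow> nat \<Rightarrow> real) \<Rightarrow> (nat \<Rightarrow> real) \<Rightarrow> nat \<Rightarrow> (nat \<Rightarrow> real) \<Rightarrow> bool" where
  "feasible_bundle m s B i y \<longleftrightarrow> (\<Sum>g<m. s i g * y g) \<le> B i"

definition feasible_allocation :: "nat \<Rightarrow> nat \<Rightarrow> (nat \<Rightarrow> nat \<Rightarrow> real) \<Rightarrow> (nat \<Rightarrow> real) \<Rightarrow> (nat \<Rightarrow> nat \<Rightarrow> real) \<Rightarrow> bool" where
  "feasible_allocation n m s B x \<longleftrightarrow> allocation n m x \<and> (\<forall>i<n. feasible_bundle m s B i (x i))"

definition envies :: "nat \<Rightarrow> (nat \<Rightarrow> nat \<Rightarrow> real) \<Rightarrow> (nat \<Rightarrow> nat \<Rightarrow> real) \<Rightarrow> (nat \<Rightarrow> real) \<Rightarrow> (nat \<Rightarrow> nat \<Rightarrow> real) \<Rightarrow> nat \<Rightarrow> nat \<Rightarrow> bool" where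
  "envies m v s B x i h \<longleftrightarrow>
     (\<exists>y. frac_bundle m y \<and> (\<forall>g<m. y g \<le> x h g) \<and> feasible_bundle m s B i y \<and> val m v i y > val m v i (x i))"

definition envy_graph :: "nat \<Rightarrow> nat \<Rightarrow> (nat \<Rightarrow> nat \<Rightarrow> real) \<Rightarrow> (nat \<Rightarrow> nat \<Rightarrow> real) \<Rightarrow> (nat \<Rightarrow> real) \<Rightarrow> (nat \<Rightarrow> nat \<Rightarrow> real) \<Rightarrow> (nat \<times> nat) set" where
  "envy_graph n m v s B x = {(i, h). i < n \<and> h < n \<and> envies m v s B x i h}"

end

theory Submission
  imports Defs
begin

lemma shift_sum: "f (k::nat) = f 0 \<Longrightarrow> (\<Sum>j<k. f (Suc j)) = (\<Sum>j<k. (f j::real))"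
  using sum.lessThan_Suc_shift[of f k] sum.lessThan_Suc[of f k] by simp

theorem lemma2:
  fixes n m :: nat
    and v s :: "nat \<Rightarrow> nat \<Rightarrow> real"
    and B w :: "nat \<Rightarrow> real"
    and x :: "nat \<Rightarrow> nat \<Rightarrow> real"
  assumes v_nonneg: "\<forall>i<n. \<forall>g<m. 0 \<le> v i g"
    and s_nonneg: "\<forall>i<n. \<forall>g<m. 0 \<le> s i g"
    and B_nonneg: "\<forall>i<n. 0 \<le> B i"
    and w_pos: "\<forall>i<n. 0 < w i"
    and x_feas: "feasible_allocation n m s B x"
    and x_opt: "\<forall>x'. feasible_allocation n m s B x' \<longrightarrow>
                  (\<Sum>i<n. w i * val m v i (x' i)) \<le> (\<Sum>i<n. w i * val m v i (x i))"
  shows "acyclic (envy_graph n m v s B x)"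
proof (rule ccontr)
  define E where "E = envy_graph n m v s B x"
  assume "\<not> acyclic (envy_graph n m v s B x)"
  then obtain a0 where "(a0, a0) \<in> E\<^sup>+" unfolding acyclic_def E_def by blast
  then obtain k0 where "k0 > 0" "(a0, a0) \<in> E ^^ k0" using trancl_power by blast
  define k where "k = (LEAST k. k > 0 \<and> (\<exists>a. (a, a) \<in> E ^^ k))"
  have kP: "k > 0 \<and> (\<exists>a. (a, a) \<in> E ^^ k)"
    unfolding k_def by (rule LeastI[of _ k0]) (use \<open>k0 > 0\<close> \<open>(a0, a0) \<in> E ^^ k0\<close> in blast)
  have kmin: "\<And>k'. k' > 0 \<Longrightarrow> (a, a) \<in> E ^^ k' \<Longrightarrow> k \<le> k'" for a
    unfolding k_def by (rule Least_le) blast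
  from kP have k0: "k > 0" by blast
  from kP obtain a where "(a, a) \<in> E ^^ k" by blast
  then obtain p where p0: "p 0 = a" and pk: "p k = a" and pE: "\<And>j. j < k \<Longrightarrow> (p j, p (Suc j)) \<in> E"
    using relpow_fun_conv[of a a k E] by blast
  have pn: "p j < n" if "j < k" for j using pE[OF that] unfolding E_def envy_graph_def by auto
  have inj: "inj_on p {..<k}"
  proof (rule inj_onI, rule ccontr)
    fix i j assume i: "i \<in> {..<k}" and j: "j \<in> {..<k}" and eq: "p i = p j" and ne: "i \<noteq> j"
    have gen: "False" if "i' < j'" "j' < k" "p i' = p j'" for i' j'
    proof -
      have "(p i', p j') \<in> E ^^ (j' - i')"
        unfolding relpow_fun_conv
        by (rule exI[of _ "\<lambda>t. p (i' + t)"]) (use that pE in auto)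
      with that have "k \<le> j' - i'" using kmin[of "j' - i'" "p i'"] by simp
      with that show False by simp
    qed
    show False using ne i j eq gen[of i j] gen[of j i] by (cases "i < j") auto
  qed
  have env: "envies m v s B x (p j) (p (Suc j))" if "j < k" for j
    using pE[OF that] unfolding E_def envy_graph_def by auto
  define Y where "Y j = (SOME y. frac_bundle m y \<and> (\<forall>g<m. y g \<le> x (p (Suc j)) g) \<and> feasible_bundle m s B (p j) y \<and> val m v (p j) y > val m v (p j) (x (p j)))" for j
  have Y: "frac_bundle m (Y j) \<and> (\<forall>g<m. Y j g \<le> x (p (Suc j)) g) \<and> feasible_bundle m s B (p j) (Y j) \<and> val m v (p j) (Y j) > val m v (p j) (x (p j))" if "j < k" for j
    unfolding Y_def using env[OF that] unfolding envies_def by (rule someI_ex)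
  define P where "P = p ` {..<k}"
  define q where "q = the_inv_into {..<k} p"
  have qp: "q (p j) = j" if "j < k" for j unfolding q_def using the_inv_into_f_f[OF inj] that by simp
  have Psub: "P \<subseteq> {..<n}" unfolding P_def using pn by auto
  define x' where "x' i = (if i \<in> P then Y (q i) else x i)" for i
  have x'p: "x' (p j) = Y j" if "j < k" for j using that qp unfolding x'_def P_def by auto
  have xa: "allocation n m x" and xb: "\<forall>i<n. feasible_bundle m s B i (x i)"
    using x_feas unfolding feasible_allocation_def by auto
  have fin: "finite P" unfolding P_def by simp
  have sumsplit: "(\<Sum>i<n. f i) = (\<Sum>i\<in>P. f i) + (\<Sum>i\<in>{..<n}-P. f i)" for f :: "nat \<Rightarrow> real"
    using sum.subset_diff[OF Psub, of f] by (simp add: add.commute)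
  have reidx: "(\<Sum>i\<in>P. f i) = (\<Sum>j<k. f (p j))" for f :: "nat \<Rightarrow> real"
    unfolding P_def using sum.reindex[OF inj, of f] by simp
  have feas': "feasible_allocation n m s B x'"
    unfolding feasible_allocation_def allocation_def
  proof (intro conjI allI impI)
    fix i assume "i < n"
    show "frac_bundle m (x' i)"
    proof (cases "i \<in> P")
      case True then obtain j where "j < k" "i = p j" unfolding P_def by auto
      then show ?thesis using x'p Y by auto
    next
      case False then show ?thesis using xa \<open>i < n\<close> unfolding x'_def allocation_def by auto
    qed
    show "feasible_bundle m s B i (x' i)"
    proof (cases "i \<in> P")
      case True then obtain j where "j < k" "i = p j" unfolding P_def by auto
      then show ?thesis using x'p Y by auto
    next
      case False then show ?thesis using xb \<open>i < n\<close> unfolding x'_def by auto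
    qed
  next
    fix g assume g: "g < m"
    have "(\<Sum>i\<in>P. x' i g) = (\<Sum>j<k. Y j g)" using reidx x'p by simp
    also have "\<dots> \<le> (\<Sum>j<k. x (p (Suc j)) g)" by (rule sum_mono) (use Y g in auto)
    also have "\<dots> = (\<Sum>j<k. x (p j) g)" by (rule shift_sum) (simp add: p0 pk)
    also have "\<dots> = (\<Sum>i\<in>P. x i g)" using reidx by simp
    finally have le: "(\<Sum>i\<in>P. x' i g) \<le> (\<Sum>i\<in>P. x i g)" .
    have eq2: "(\<Sum>i\<in>{..<n}-P. x' i g) = (\<Sum>i\<in>{..<n}-P. x i g)" unfolding x'_def by simp
    have "(\<Sum>i<n. x' i g) \<le> (\<Sum>i<n. x i g)" using le eq2 sumsplit[of "\<lambda>i. x' i g"] sumsplit[of "\<lambda>i. x i g"] by simp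
    also have "\<dots> \<le> 1" using xa g unfolding allocation_def by auto
    finally show "(\<Sum>i<n. x' i g) \<le> 1" .
  qed
  have ge: "w i * val m v i (x i) \<le> w i * val m v i (x' i)" if "i \<in> {..<n}" for i
  proof (cases "i \<in> P")
    case True then obtain j where j: "j < k" "i = p j" unfolding P_def by auto
    then show ?thesis using x'p[OF j(1)] Y[OF j(1)] w_pos that by auto
  next
    case False then show ?thesis unfolding x'_def by simp
  qed
  have gt: "w a * val m v a (x a) < w a * val m v a (x' a)"
    using x'p[OF k0] Y[OF k0] w_pos pn[OF k0] p0 by auto
  have "(\<Sum>i<n. w i * val m v i (x i)) < (\<Sum>i<n. w i * val m v i (x' i))"
    by (rule sum_strict_mono_ex1) (use ge gt pn[OF k0] p0 in auto)
  with x_opt feas' show False by fastforce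
qed

end
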